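(* Let $(X,T),(Y,S)$ be transitive $1$-step shifts of finite type over a finite alphabet $\mathcal{A}$, let $F:\mathcal{A}^2\to\mathbb{R}$ and $f(x,y)=F(x(0),y(0))$, and let $C\ge0$. If $\nu_0\in\mathcal{M}_S(Y)$ is supported on $Y_{f,C}$, then $\nu_0$ is $\alpha$-maximizing, i.e. $\psi_f(\nu_0)=\alpha(f)$.
   Context: $\mathcal{A}^{\mathbb{Z}}$ carries the product of discrete topologies and left shift $(Tx)(j)=x(j+1)$. A shift is a nonempty compact $X\subseteq\mathcal{A}^{\mathbb{Z}}$ with $TX=X$; a $1$-step shift of finite type is one of the form $X=\{x:(T^jx)|_{[0,1]}\notin\mathcal{F}\ \forall j\}$ for some $\mathcal{F}\subseteq\mathcal{A}^{\{0,1\}}$. Transitive: there is $D\in\mathbb{N}$ such that for all $x_1,x_2\in X$, integers $b_1,a_2$ with $a_2-b_1\ge D$, some $x'\in X$ has $x'(j)=x_1(j)$ for $j\le b_1$ and $x'(j)=x_2(j)$ for $j\ge a_2$. $\psi_f(\nu)=\min\{\int f\,d\lambda:\lambda\in\mathcal{M}_{T\times S}(X\times Y),(\pi_Y)_*\lambda=\nu\}$ with $\pi_Y(x,y)=y$, and $\alpha(f)=\sup_{\nu\in\mathcal{M}_S(Y)}\psi_f(\nu)$. $\mathbb{S}_{[a,b]}f(x,y)=\sum_{j=a}^bf(T^jx,S^jy)$; $P_{a,b}=\{(v_1,v_2)\in\mathcal{A}^2:\exists x\in X,x(a)=v_1,x(b)=v_2\}$; $H_{a,b,v_1,v_2}(y)=\min\{\mathbb{S}_{[a,b]}f(x,y):x\in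 X,x(a)=v_1,x(b)=v_2\}$. $Y_{f,C}$ is the set of $y\in Y$ such that for all integers $a\le b$ there is $(v_1,v_2)\in P_{a,b}$ with $H_{a,b,v_1,v_2}(y)\ge\max\{H_{a,b,v_1,v_2}(y'):y'\in Y,y'|_{\mathbb{Z}\setminus[a,b]}=y|_{\mathbb{Z}\setminus[a,b]}\}-C$. "Supported on $Y_{f,C}$" means $\nu_0(Y_{f,C})=1$. *)

theory Defs
  imports "HOL-Probability.Probability"
begin

definition shift :: "(int \<Rightarrow> 'a) \<Rightarrow> (int \<Rightarrow> 'a)" where
  "shift x = (\<lambda>j. x (j + 1))"

definition shiftZ :: "int \<Rightarrow> (int \<Rightarrow> 'a) \<Rightarrow> (int \<Rightarrow> 'a)" where
  "shiftZ j x = (\<lambda>i. x (i + j))"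

text \<open>Measurable structure on A^Z: product of discrete sigma algebras
  (for finite A this is the Borel sigma algebra of the product topology).\<close>
definition seqM :: "(int \<Rightarrow> 'a) measure" where
  "seqM = (\<Pi>\<^sub>M i\<in>(UNIV::int set). count_space UNIV)"

definition is_1step_SFT :: "(int \<Rightarrow> 'a) set \<Rightarrow> bool" where
  "is_1step_SFT X \<longleftrightarrow> X \<noteq> {} \<and> shift ` X = X \<and>
     (\<exists>Fb :: ('a \<times> 'a) set. X = {x. \<forall>j. (x j, x (j + 1)) \<notin> Fb})"

definition transitive_shift :: "(int \<Rightarrow> 'a) set \<Rightarrow> bool" where
  "transitive_shift X \<longleftrightarrow> (\<exists>D::nat. \<forall>x1\<in>X. \<forall>x2\<in>X. \<forall>b1 a2::int. a2 - b1 \<ge> int D \<longrightarrow>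
      (\<exists>x'\<in>X. (\<forall>j\<le>b1. x' j = x1 j) \<and> (\<forall>j\<ge>a2. x' j = x2 j)))"

definition inv_probs :: "(int \<Rightarrow> 'a) set \<Rightarrow> (int \<Rightarrow> 'a) measure set" where
  "inv_probs X = {\<mu>. sets \<mu> = sets seqM \<and> prob_space \<mu> \<and> emeasure \<mu> X = 1
       \<and> distr \<mu> \<mu> shift = \<mu>}"

definition inv_probs2 :: "(int \<Rightarrow> 'a) set \<Rightarrow> (int \<Rightarrow> 'a) set
      \<Rightarrow> ((int \<Rightarrow> 'a) \<times> (int \<Rightarrow> 'a)) measure set" where
  "inv_probs2 X Y = {m. sets m = sets (seqM \<Otimes>\<^sub>M seqM) \<and> prob_space m
       \<and> emeasure m (X \<times> Y) = 1
       \<and> distr m m (\<lambda>(x, y). (shift x, shift y)) = m}"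

definition potf :: "('a \<Rightarrow> 'a \<Rightarrow> real) \<Rightarrow> (int \<Rightarrow> 'a) \<times> (int \<Rightarrow> 'a) \<Rightarrow> real" where
  "potf F = (\<lambda>(x, y). F (x 0) (y 0))"

text \<open>psi_f(nu) = min over joinings; written as Inf (the minimum is attained).\<close>
definition psi :: "('a \<Rightarrow> 'a \<Rightarrow> real) \<Rightarrow> (int \<Rightarrow> 'a) set \<Rightarrow> (int \<Rightarrow> 'a) set
      \<Rightarrow> (int \<Rightarrow> 'a) measure \<Rightarrow> real" where
  "psi F X Y \<nu> = Inf {integral\<^sup>L m (potf F) | m. m \<in> inv_probs2 X Y \<and> distr m seqM snd = \<nu>}"

definition alpha :: "('a \<Rightarrow> 'a \<Rightarrow> real) \<Rightarrow> (int \<Rightarrow> 'a) set \<Rightarrow> (int \<Rightarrow> 'a) set \<Rightarrow> real" where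
  "alpha F X Y = (SUP \<nu>\<in>inv_probs Y. psi F X Y \<nu>)"

definition birk :: "('a \<Rightarrow> 'a \<Rightarrow> real) \<Rightarrow> int \<Rightarrow> int \<Rightarrow> (int \<Rightarrow> 'a) \<Rightarrow> (int \<Rightarrow> 'a) \<Rightarrow> real" where
  "birk F a b x y = (\<Sum>j = a..b. potf F (shiftZ j x, shiftZ j y))"

definition Pab :: "(int \<Rightarrow> 'a) set \<Rightarrow> int \<Rightarrow> int \<Rightarrow> ('a \<times> 'a) set" where
  "Pab X a b = {(v1, v2). \<exists>x\<in>X. x a = v1 \<and> x b = v2}"

definition Hab :: "('a \<Rightarrow> 'a \<Rightarrow> real) \<Rightarrow> (int \<Rightarrow> 'a) set \<Rightarrow> int \<Rightarrow> int \<Rightarrow> 'a \<Rightarrow> 'a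
      \<Rightarrow> (int \<Rightarrow> 'a) \<Rightarrow> real" where
  "Hab F X a b v1 v2 y = Min {birk F a b x y | x. x \<in> X \<and> x a = v1 \<and> x b = v2}"

definition YfC :: "('a \<Rightarrow> 'a \<Rightarrow> real) \<Rightarrow> (int \<Rightarrow> 'a) set \<Rightarrow> (int \<Rightarrow> 'a) set \<Rightarrow> real
      \<Rightarrow> (int \<Rightarrow> 'a) set" where
  "YfC F X Y C = {y \<in> Y. \<forall>a b::int. a \<le> b \<longrightarrow>
      (\<exists>(v1, v2)\<in>Pab X a b.
         Hab F X a b v1 v2 y \<ge>
           Max {Hab F X a b v1 v2 y' | y'. y' \<in> Y \<and> (\<forall>j. j \<notin> {a..b} \<longrightarrow> y' j = y j)} - C)}"

end

theory Submission
  imports Defs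
begin

lemma space_seqM[simp]: "space seqM = UNIV"
  by (simp add: seqM_def space_PiM)

lemma fin_dep_meas:
  fixes g :: "(int \<Rightarrow> 'a::finite) \<Rightarrow> 'b"
  assumes J: "finite J" and dep: "\<And>y y'. (\<And>i. i \<in> J \<Longrightarrow> y i = y' i) \<Longrightarrow> g y = g y'"
    and sp: "\<And>y. g y \<in> space N"
  shows "g \<in> measurable seqM N"
proof (rule measurableI)
  fix y show "g y \<in> space N" by (rule sp)
next
  fix B assume "B \<in> sets N"
  define R where "R = (\<lambda>y. restrict y J) ` {y. g y \<in> B}"
  have Rsub: "R \<subseteq> PiE J (\<lambda>_. UNIV)" unfolding R_def by auto
  have finR: "finite R" using finite_PiE[OF J, of "\<lambda>_. UNIV::'a set"] Rsub finite_subset by auto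
  have eq: "g -` B \<inter> space seqM = (\<lambda>y. restrict y J) -` R"
  proof -
    have A1: "g y \<in> B" if yR: "restrict y J \<in> R" for y
    proof -
      obtain y' where y': "g y' \<in> B" "restrict y J = restrict y' J"
        using yR unfolding R_def by blast
      have "y' i = y i" if "i \<in> J" for i
        using fun_cong[OF y'(2), of i] that by simp
      then have "g y' = g y" by (rule dep)
      then show "g y \<in> B" using y' by simp
    qed
    have A2: "restrict y J \<in> R" if "g y \<in> B" for y
      using that unfolding R_def by blast
    show ?thesis unfolding space_seqM vimage_def using A1 A2 by auto
  qed
  have "R \<in> sets (Pi\<^sub>M J (\<lambda>_. count_space UNIV))"
  proof -
    have "R = (\<Union>w\<in>R. PiE J (\<lambda>i. {w i}))"
    proof -
      have "PiE J (\<lambda>i. {w i}) = {w}" if "w \<in> R" for w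
        using that Rsub by (intro PiE_singleton) (auto simp: PiE_iff)
      then show ?thesis by auto
    qed
    also have "\<dots> \<in> sets (Pi\<^sub>M J (\<lambda>_. count_space UNIV))"
      using finR J by (intro sets.finite_UN sets_PiM_I_finite) auto
    finally show ?thesis .
  qed
  moreover have "(\<lambda>y. restrict y J) \<in> measurable seqM (Pi\<^sub>M J (\<lambda>_. count_space UNIV))"
    unfolding seqM_def by (rule measurable_restrict_subset) simp
  ultimately have "(\<lambda>y. restrict y J) -` R \<inter> space seqM \<in> sets seqM"
    by (rule measurable_sets[rotated])
  then show "g -` B \<inter> space seqM \<in> sets seqM" using eq by simp
qed

lemma shiftZ_apply[simp]: "shiftZ k x i = x (i + k)"
  by (simp add: shiftZ_def)

lemma funpow_shift: "(shift ^^ n) x = shiftZ (int n) x"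
  by (induction n arbitrary: x) (auto simp: shift_def shiftZ_def ac_simps)

lemma funpow_shift_apply[simp]: "(shift ^^ n) x i = x (i + int n)"
  by (simp add: funpow_shift)

lemma birk_eq: "birk F a b x y = (\<Sum>j\<in>{a..b}. F (x j) (y j))"
  by (simp add: birk_def potf_def)

lemma comp_meas[measurable]: "(\<lambda>x::int\<Rightarrow>'a::finite. x i) \<in> measurable seqM (count_space UNIV)"
  by (rule fin_dep_meas[of "{i}"]) auto

lemma meas_to_seqM:
  assumes "\<And>i. (\<lambda>w. h w i) \<in> measurable M (count_space UNIV)"
  shows "h \<in> measurable M seqM"
  unfolding seqM_def by (rule measurable_PiM_single') (use assms in auto)

lemma shift_meas[measurable]: "(shift::(int\<Rightarrow>'a::finite)\<Rightarrow>_) \<in> measurable seqM seqM"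
  by (rule meas_to_seqM, unfold shift_def, rule fin_dep_meas[of "{_ + 1}"]) auto

lemma funpow_shift_meas[measurable]: "((shift::(int\<Rightarrow>'a::finite)\<Rightarrow>_) ^^ n) \<in> measurable seqM seqM"
  by (induction n) auto

lemma fin_dep_sets:
  assumes "finite J" and "\<And>y y'. (\<And>i. i \<in> J \<Longrightarrow> y i = y' i) \<Longrightarrow> P y = P y'"
  shows "{y::int\<Rightarrow>'a::finite. P y} \<in> sets seqM"
proof -
  have "P \<in> measurable seqM (count_space UNIV)"
    by (rule fin_dep_meas[OF assms]) auto
  then have "P -` {True} \<inter> space seqM \<in> sets seqM" by (rule measurable_sets) auto
  moreover have "P -` {True} \<inter> space seqM = {y. P y}" by auto
  ultimately show ?thesis by simp
qed

lemma SFT_sets: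
  "{x::int\<Rightarrow>'a::finite. \<forall>j. (x j, x (j + 1)) \<notin> Fb} \<in> sets seqM"
proof -
  have "{x::int\<Rightarrow>'a. \<forall>j. (x j, x (j + 1)) \<notin> Fb} = (\<Inter>j\<in>UNIV. {x. (x j, x (j + 1)) \<notin> Fb})" by auto
  also have "\<dots> \<in> sets seqM"
  proof (rule sets.countable_INT'')
    fix j :: int
    show "{x::int\<Rightarrow>'a. (x j, x (j + 1)) \<notin> Fb} \<in> sets seqM"
      by (rule fin_dep_sets[of "{j, j + 1}"]) auto
  qed (auto simp flip: space_seqM)
  finally show ?thesis .
qed

lemma potf_meas[measurable]: "potf (F::'a::finite\<Rightarrow>_) \<in> borel_measurable (seqM \<Otimes>\<^sub>M seqM)"
proof -
  have "(\<lambda>p. fst p 0) \<in> measurable (seqM \<Otimes>\<^sub>M seqM) (count_space (UNIV::'a set))"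
    by (rule measurable_compose[OF measurable_fst comp_meas])
  moreover have "(\<lambda>p. snd p 0) \<in> measurable (seqM \<Otimes>\<^sub>M seqM) (count_space (UNIV::'a set))"
    by (rule measurable_compose[OF measurable_snd comp_meas])
  ultimately have "(\<lambda>p::(int\<Rightarrow>'a)\<times>(int\<Rightarrow>'a). (fst p 0, snd p 0)) \<in> measurable (seqM \<Otimes>\<^sub>M seqM) (count_space UNIV \<Otimes>\<^sub>M count_space UNIV)"
    by (rule measurable_Pair)
  moreover have "(\<lambda>(a, b). F a b) \<in> borel_measurable (count_space (UNIV::'a set) \<Otimes>\<^sub>M count_space (UNIV::'a set))"
    by (simp add: pair_measure_countable countable_finite)
  ultimately have "(\<lambda>(a, b). F a b) \<circ> (\<lambda>p. (fst p 0, snd p 0)) \<in> borel_measurable (seqM \<Otimes>\<^sub>M seqM)"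
    by (rule measurable_comp)
  then show ?thesis by (simp add: potf_def comp_def case_prod_beta)
qed

lemma sum_diff_bound:
  fixes g1 g2 :: "'i \<Rightarrow> real"
  assumes "finite J" "finite E" "\<And>j. j \<in> J - E \<Longrightarrow> g1 j = g2 j"
    "\<And>j. \<bar>g1 j\<bar> \<le> B" "\<And>j. \<bar>g2 j\<bar> \<le> B"
  shows "sum g1 J \<le> sum g2 J + 2 * B * card E"
proof -
  have B0: "0 \<le> B" using assms(4)[of undefined] by linarith
  have "sum g1 J = sum g1 (J \<inter> E) + sum g1 (J - E)"
    using assms(1) by (metis sum.Int_Diff)
  moreover have "sum g2 J = sum g2 (J \<inter> E) + sum g2 (J - E)"
    using assms(1) by (metis sum.Int_Diff)
  moreover have "sum g1 (J - E) = sum g2 (J - E)" using assms(3) by (rule sum.cong[OF refl])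
  moreover have "sum g1 (J \<inter> E) \<le> sum g2 (J \<inter> E) + sum (\<lambda>_. 2 * B) (J \<inter> E)"
  proof -
    have "sum g1 (J \<inter> E) \<le> sum (\<lambda>j. g2 j + 2 * B) (J \<inter> E)"
      by (rule sum_mono) (use assms(4,5) in \<open>smt (verit, best)\<close>)
    then show ?thesis by (simp add: sum.distrib)
  qed
  moreover have "sum (\<lambda>_. 2 * B) (J \<inter> E) \<le> 2 * B * card E"
  proof -
    have "card (J \<inter> E) \<le> card E" using assms(2) by (simp add: card_mono)
    then have "B * card (J \<inter> E) \<le> B * card E" using B0 by (simp add: mult_left_mono)
    then show ?thesis by (simp add: mult.commute)
  qed
  ultimately show ?thesis by linarith
qed

lemma sum_sub_bound:
  fixes g :: "'i \<Rightarrow> real"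
  assumes "finite J" "J' \<subseteq> J" "\<And>j. \<bar>g j\<bar> \<le> B"
  shows "sum g J' - B * card (J - J') \<le> sum g J"
proof -
  have "sum g J = sum g J' + sum g (J - J')"
    using assms(1,2) by (metis add.commute sum.subset_diff)
  moreover have "sum (\<lambda>_. - B) (J - J') \<le> sum g (J - J')"
    by (rule sum_mono) (use assms(3) in \<open>smt (verit, best)\<close>)
  ultimately show ?thesis by (simp add: mult.commute)
qed

locale sett =
  fixes X Y :: "(int \<Rightarrow> 'a::finite) set" and F :: "'a \<Rightarrow> 'a \<Rightarrow> real"
    and FX FY :: "('a \<times> 'a) set" and D :: nat
  assumes X_eq: "X = {x. \<forall>j. (x j, x (j + 1)) \<notin> FX}"
    and Y_eq: "Y = {x. \<forall>j. (x j, x (j + 1)) \<notin> FY}"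
    and X_ne: "X \<noteq> {}" and Y_ne: "Y \<noteq> {}"
    and trX: "\<And>x1 x2 b1 a2. x1 \<in> X \<Longrightarrow> x2 \<in> X \<Longrightarrow> a2 - b1 \<ge> int D \<Longrightarrow>
          \<exists>x'\<in>X. (\<forall>j\<le>b1. x' j = x1 j) \<and> (\<forall>j\<ge>a2. x' j = x2 j)"
    and trY: "\<And>x1 x2 b1 a2. x1 \<in> Y \<Longrightarrow> x2 \<in> Y \<Longrightarrow> a2 - b1 \<ge> int D \<Longrightarrow>
          \<exists>x'\<in>Y. (\<forall>j\<le>b1. x' j = x1 j) \<and> (\<forall>j\<ge>a2. x' j = x2 j)"
    and D_pos: "D \<ge> 1"
begin

definition Bd :: real where "Bd = (\<Sum>p\<in>UNIV. \<bar>F (fst p) (snd p)\<bar>)"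

lemma Bd: "\<bar>F a b\<bar> \<le> Bd"
proof -
  have "\<bar>F (fst (a, b)) (snd (a, b))\<bar> \<le> (\<Sum>p\<in>UNIV. \<bar>F (fst p) (snd p)\<bar>)"
    by (rule member_le_sum) auto
  then show ?thesis by (simp add: Bd_def)
qed

lemma Bd_nonneg: "0 \<le> Bd" using Bd[of undefined undefined] by linarith

lemma X_shift: "x \<in> X \<Longrightarrow> shiftZ k x \<in> X"
proof -
  assume "x \<in> X"
  then have h: "(x j, x (j + 1)) \<notin> FX" for j unfolding X_eq by auto
  have "(x (j + k), x (j + 1 + k)) \<notin> FX" for j using h[of "j + k"] by (simp add: ac_simps)
  then show ?thesis unfolding X_eq by (simp add: shiftZ_def)
qed
lemma Y_shift: "x \<in> Y \<Longrightarrow> shiftZ k x \<in> Y"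
proof -
  assume "x \<in> Y"
  then have h: "(x j, x (j + 1)) \<notin> FY" for j unfolding Y_eq by auto
  have "(x (j + k), x (j + 1 + k)) \<notin> FY" for j using h[of "j + k"] by (simp add: ac_simps)
  then show ?thesis unfolding Y_eq by (simp add: shiftZ_def)
qed

lemma X_sets: "X \<in> sets seqM" unfolding X_eq by (rule SFT_sets)
lemma Y_sets: "Y \<in> sets seqM" unfolding Y_eq by (rule SFT_sets)

definition cost :: "nat \<Rightarrow> (int \<Rightarrow> 'a) \<Rightarrow> (int \<Rightarrow> 'a) \<Rightarrow> real" where
  "cost L x y = (\<Sum>j\<in>{0..<int L}. F (x j) (y j))"

lemma wsum_finite:
  assumes "finite J"
  shows "finite {\<Sum>j\<in>J. F (x j) (y j) | x. P x}"
proof -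
  have "{\<Sum>j\<in>J. F (x j) (y j) | x. P x} \<subseteq> (\<lambda>h. \<Sum>j\<in>J. F (h j) (y j)) ` (J \<rightarrow>\<^sub>E UNIV)"
  proof
    fix v assume "v \<in> {\<Sum>j\<in>J. F (x j) (y j) | x. P x}"
    then obtain x where v: "v = (\<Sum>j\<in>J. F (x j) (y j))" by blast
    have "v = (\<Sum>j\<in>J. F (restrict x J j) (y j))" unfolding v by (rule sum.cong) auto
    moreover have "restrict x J \<in> J \<rightarrow>\<^sub>E UNIV" by auto
    ultimately show "v \<in> (\<lambda>h. \<Sum>j\<in>J. F (h j) (y j)) ` (J \<rightarrow>\<^sub>E UNIV)" by blast
  qed
  moreover have "finite (J \<rightarrow>\<^sub>E (UNIV::'a set))" using assms by (rule finite_PiE) auto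
  ultimately show ?thesis by (meson finite_imageI finite_subset)
qed

lemma cost_finite: "finite {cost L x y | x. P x}"
  unfolding cost_def by (rule wsum_finite) auto

lemma ex_min: "\<exists>x\<in>X. \<forall>x'\<in>X. cost L x y \<le> cost L x' y"
proof -
  let ?S = "{cost L x y | x. x \<in> X}"
  have fin: "finite ?S" by (rule cost_finite)
  have ne: "?S \<noteq> {}" using X_ne by auto
  have "Min ?S \<in> ?S" using fin ne by (rule Min_in)
  then obtain x where x: "x \<in> X" "Min ?S = cost L x y" by auto
  have "\<forall>x'\<in>X. cost L x y \<le> cost L x' y"
    using x fin by (auto intro!: Min_le simp flip: x(2))
  then show ?thesis using x by blast
qed

definition zc :: "nat \<Rightarrow> (int \<Rightarrow> 'a) \<Rightarrow> (int \<Rightarrow> 'a)" where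
  "zc L y = (SOME x. x \<in> X \<and> (\<forall>x'\<in>X. cost L x y \<le> cost L x' y))"

lemma zc: "zc L y \<in> X" "x' \<in> X \<Longrightarrow> cost L (zc L y) y \<le> cost L x' y"
proof -
  have "zc L y \<in> X \<and> (\<forall>x'\<in>X. cost L (zc L y) y \<le> cost L x' y)"
  proof -
    have "\<exists>x. x \<in> X \<and> (\<forall>x'\<in>X. cost L x y \<le> cost L x' y)" using ex_min by blast
    then show ?thesis unfolding zc_def by (rule someI_ex)
  qed
  then show "zc L y \<in> X" "x' \<in> X \<Longrightarrow> cost L (zc L y) y \<le> cost L x' y" by auto
qed

definition A :: "nat \<Rightarrow> (int \<Rightarrow> 'a) \<Rightarrow> real" where
  "A L y = cost L (zc L y) y"

lemma A_le: "x \<in> X \<Longrightarrow> A L y \<le> cost L x y"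
  unfolding A_def by (rule zc)

lemma cost_dep: "(\<And>j. j \<in> {0..<int L} \<Longrightarrow> y j = y' j) \<Longrightarrow> cost L x y = cost L x y'"
  unfolding cost_def by (rule sum.cong) auto

lemma zc_dep: "(\<And>j. j \<in> {0..<int L} \<Longrightarrow> y j = y' j) \<Longrightarrow> zc L y = zc L y'"
proof -
  assume h: "\<And>j. j \<in> {0..<int L} \<Longrightarrow> y j = y' j"
  have "\<And>x. cost L x y = cost L x y'" using h by (rule cost_dep)
  then show ?thesis unfolding zc_def by simp
qed

lemma A_dep: "(\<And>j. j \<in> {0..<int L} \<Longrightarrow> y j = y' j) \<Longrightarrow> A L y = A L y'"
  unfolding A_def by (metis cost_dep zc_dep)

lemma cost_bound: "\<bar>cost L x y\<bar> \<le> L * Bd"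
proof -
  have "\<bar>cost L x y\<bar> \<le> (\<Sum>j\<in>{0..<int L}. \<bar>F (x j) (y j)\<bar>)"
    unfolding cost_def by (rule sum_abs)
  also have "\<dots> \<le> (\<Sum>j\<in>{0..<int L}. Bd)" by (rule sum_mono) (rule Bd)
  finally show ?thesis by simp
qed

lemma A_bound: "\<bar>A L y\<bar> \<le> L * Bd"
  unfolding A_def by (rule cost_bound)

end

context sett begin

lemma Hab_eq:
  assumes "(1::nat) \<le> n"
  shows "Hab F X 0 (int n - 1) v1 v2 w = Min {cost n x w | x. x \<in> X \<and> x 0 = v1 \<and> x (int n - 1) = v2}"
proof -
  have "{0..int n - 1} = {0..<int n}" by auto
  then have "\<And>x. birk F 0 (int n - 1) x w = cost n x w" by (simp add: birk_eq cost_def)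
  then show ?thesis unfolding Hab_def by simp
qed

lemma step2:
  assumes y: "y \<in> YfC F X Y C" and ys: "ys \<in> Y" and n: "2 * D + 1 \<le> n"
  shows "A (n - 2 * D) ys - C - 6 * D * Bd \<le> A n y"
proof -
  have n1: "(1::nat) \<le> n" using n by simp
  have yY: "y \<in> Y" using y unfolding YfC_def by blast
  have "0 \<le> int n - 1" using n by simp
  then obtain v1 v2 where P: "(v1, v2) \<in> Pab X 0 (int n - 1)" and
    H: "Hab F X 0 (int n - 1) v1 v2 y \<ge>
           Max {Hab F X 0 (int n - 1) v1 v2 y' | y'. y' \<in> Y \<and> (\<forall>j. j \<notin> {0..int n - 1} \<longrightarrow> y' j = y j)} - C"
    using y unfolding YfC_def by blast
  define H where "H = Hab F X 0 (int n - 1) v1 v2"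
  define T where "T = (\<lambda>w. {cost n x w | x. x \<in> X \<and> x 0 = v1 \<and> x (int n - 1) = v2})"
  have H_eq: "H w = Min (T w)" for w unfolding H_def T_def by (rule Hab_eq[OF n1])
  obtain xt where xt: "xt \<in> X" "xt 0 = v1" "xt (int n - 1) = v2" using P unfolding Pab_def by blast
  have Tfin: "finite (T w)" for w unfolding T_def by (rule cost_finite)
  have Tne: "T w \<noteq> {}" for w unfolding T_def using xt by blast
  have i: "H y \<le> A n y + 4 * D * Bd"
  proof -
    define xs where "xs = zc n y"
    have xs: "xs \<in> X" unfolding xs_def by (rule zc)
    obtain x1 where x1: "x1 \<in> X" "\<forall>j\<le>0. x1 j = xt j" "\<forall>j\<ge>int D. x1 j = xs j"
      using trX[OF xt(1) xs, of "int D" 0, OF order_eq_refl[OF diff_zero[symmetric]]] by blast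
    obtain x2 where x2: "x2 \<in> X" "\<forall>j\<le>int n - 1 - int D. x2 j = x1 j" "\<forall>j\<ge>int n - 1. x2 j = xt j"
      using trX[OF x1(1) xt(1), of "int n - 1" "int n - 1 - int D", OF order_eq_refl] by force
    have "x2 0 = v1" using x1 x2 xt n by auto
    moreover have "x2 (int n - 1) = v2" using x2 xt by auto
    ultimately have "cost n x2 y \<in> T y" unfolding T_def using x2(1) by blast
    then have "H y \<le> cost n x2 y" unfolding H_eq using Tfin by (rule Min_le[rotated])
    also have "cost n x2 y \<le> cost n xs y + 2 * Bd * card ({0..<int D} \<union> {int n - int D..<int n})"
      unfolding cost_def
    proof (rule sum_diff_bound)
      fix j assume "j \<in> {0..<int n} - ({0..<int D} \<union> {int n - int D..<int n})"
      then have "int D \<le> j" "j \<le> int n - 1 - int D" by auto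
      then show "F (x2 j) (y j) = F (xs j) (y j)" using x1 x2 by auto
    qed (auto intro: Bd)
    also have "card ({0..<int D} \<union> {int n - int D..<int n}) \<le> 2 * D"
    proof -
      have "card ({0..<int D} \<union> {int n - int D..<int n}) \<le> card {0..<int D} + card {int n - int D..<int n}"
        by (rule card_Un_le)
      then show ?thesis by simp
    qed
    then have "2 * Bd * card ({0..<int D} \<union> {int n - int D..<int n}) \<le> 2 * Bd * (2 * D)"
      using Bd_nonneg by (intro mult_left_mono) auto
    finally show ?thesis unfolding A_def xs_def by (simp add: algebra_simps)
  qed
  define y2 where "y2 = shiftZ (- int D) ys"
  have y2: "y2 \<in> Y" unfolding y2_def using ys by (rule Y_shift)
  obtain z where z: "z \<in> Y" "\<forall>j\<le>-1. z j = y j" "\<forall>j\<ge>int D - 1. z j = y2 j"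
    using trY[OF yY y2, of "int D - 1" "-1", OF order_eq_refl] by force
  obtain y' where y': "y' \<in> Y" "\<forall>j\<le>int n - int D. y' j = z j" "\<forall>j\<ge>int n. y' j = y j"
    using trY[OF z(1) yY, of "int n" "int n - int D", OF order_eq_refl] by force
  have y'out: "\<forall>j. j \<notin> {0..int n - 1} \<longrightarrow> y' j = y j"
  proof (intro allI impI)
    fix j assume "j \<notin> {0..int n - 1}"
    then have "j < 0 \<or> j \<ge> int n" by auto
    then consider "j < 0" | "j \<ge> int n" by blast
    then show "y' j = y j"
    proof cases
      case 1 then show ?thesis using y' z n by auto
    qed (use y' in auto)
  qed
  have y'mid: "y' j = ys (j - int D)" if "int D \<le> j" "j < int n - int D" for j
    using that y' z by (auto simp: y2_def)
  define S where "S = {H y'' | y''. y'' \<in> Y \<and> (\<forall>j. j \<notin> {0..int n - 1} \<longrightarrow> y'' j = y j)}"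
  have Hdep: "H w = H (restrict w {0..<int n})" for w
  proof -
    have "T w = T (restrict w {0..<int n})"
      unfolding T_def by (simp add: cost_def)
    then show ?thesis by (simp add: H_eq)
  qed
  have Sfin: "finite S"
  proof -
    have "S \<subseteq> H ` ({0..<int n} \<rightarrow>\<^sub>E UNIV)"
    proof
      fix v assume "v \<in> S"
      then obtain w where "v = H w" unfolding S_def by blast
      then have "v = H (restrict w {0..<int n})" using Hdep by metis
      moreover have "restrict w {0..<int n} \<in> {0..<int n} \<rightarrow>\<^sub>E UNIV" by simp
      ultimately show "v \<in> H ` ({0..<int n} \<rightarrow>\<^sub>E UNIV)" by blast
    qed
    moreover have "finite ({0..<int n} \<rightarrow>\<^sub>E (UNIV::'a set))" by (rule finite_PiE) auto
    ultimately show ?thesis by (meson finite_imageI finite_subset)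
  qed
  have "H y' \<in> S" unfolding S_def using y'(1) y'out by blast
  then have HS: "H y' \<le> Max S" using Sfin by (rule Max_ge[rotated])
  have ii: "A (n - 2 * D) ys - 2 * D * Bd \<le> H y'"
  proof -
    have "Min (T y') \<in> T y'" using Tfin Tne by (rule Min_in)
    then obtain x where x: "x \<in> X" "H y' = cost n x y'" unfolding T_def H_eq by auto
    have "(\<Sum>j\<in>{int D..<int n - int D}. F (x j) (y' j)) - Bd * card ({0..<int n} - {int D..<int n - int D})
          \<le> cost n x y'"
      unfolding cost_def by (rule sum_sub_bound) (auto intro: Bd)
    moreover have "card ({0..<int n} - {int D..<int n - int D}) = 2 * D"
    proof -
      have "card ({0..<int n} - {int D..<int n - int D}) = card {0..<int n} - card {int D..<int n - int D}"
        by (rule card_Diff_subset) auto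
      then show ?thesis using n by simp
    qed
    moreover have "(\<Sum>j\<in>{int D..<int n - int D}. F (x j) (y' j)) = cost (n - 2 * D) (shiftZ (int D) x) ys"
    proof -
      have img: "(\<lambda>i. i + int D) ` {0..<int n - int D - int D} = {int D..<int n - int D}"
        by (rule image_add_int_atLeastLessThan)
      have "(\<Sum>j\<in>{int D..<int n - int D}. F (x j) (y' j)) = (\<Sum>j\<in>{int D..<int n - int D}. F (x j) (ys (j - int D)))"
        by (rule sum.cong) (auto simp: y'mid)
      also have "\<dots> = (\<Sum>i\<in>{0..<int n - int D - int D}. F (x (i + int D)) (ys i))"
        unfolding img[symmetric] by (subst sum.reindex) (auto simp: inj_on_def)
      also have "int n - int D - int D = int (n - 2 * D)" using n by simp
      finally show ?thesis by (simp add: cost_def)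
    qed
    moreover have "A (n - 2 * D) ys \<le> cost (n - 2 * D) (shiftZ (int D) x) ys"
      by (rule A_le) (rule X_shift[OF x(1)])
    ultimately show ?thesis using x(2) by (simp add: mult.commute)
  qed
  have "A (n - 2 * D) ys - C - 2 * D * Bd \<le> H y"
    using H HS ii unfolding H_def S_def by linarith
  then have "A (n - 2 * D) ys - C - 2 * D * Bd - 4 * D * Bd \<le> A n y" using i by linarith
  then show ?thesis by (simp add: algebra_simps)
qed

end

definition HH :: "(int \<Rightarrow> 'a) \<times> (int \<Rightarrow> 'a) \<Rightarrow> (int \<Rightarrow> 'a) \<times> (int \<Rightarrow> 'a)" where
  "HH = (\<lambda>(x, y). (shift x, shift y))"

lemma HH_meas[measurable]: "(HH::(int \<Rightarrow> 'a::finite) \<times> _ \<Rightarrow> _) \<in> measurable (seqM \<Otimes>\<^sub>M seqM) (seqM \<Otimes>\<^sub>M seqM)"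
proof -
  have "(\<lambda>p::(int \<Rightarrow> 'a) \<times> (int \<Rightarrow> 'a). (shift (fst p), shift (snd p))) \<in> measurable (seqM \<Otimes>\<^sub>M seqM) (seqM \<Otimes>\<^sub>M seqM)"
    by (intro measurable_Pair measurable_compose[OF measurable_fst shift_meas] measurable_compose[OF measurable_snd shift_meas])
  then show ?thesis by (simp add: HH_def case_prod_beta)
qed

lemma HH_funpow: "(HH ^^ j) (x, y) = ((shift ^^ j) x, (shift ^^ j) y)"
  by (induction j) (simp_all add: HH_def del: funpow_shift_apply)

lemma HH_funpow_meas[measurable]: "((HH::(int \<Rightarrow> 'a::finite) \<times> _ \<Rightarrow> _) ^^ j) \<in> measurable (seqM \<Otimes>\<^sub>M seqM) (seqM \<Otimes>\<^sub>M seqM)"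
  by (induction j) auto

lemma potf_HH: "potf F ((HH ^^ j) p) = F (fst p (int j)) (snd p (int j))"
  by (cases p) (simp add: HH_funpow potf_def)

context sett begin

lemma A_meas[measurable]: "A n \<in> borel_measurable seqM"
  by (rule fin_dep_meas[of "{0..<int n}"]) (auto intro: A_dep)

lemma potf_bound: "\<bar>potf F p\<bar> \<le> Bd"
  by (cases p) (simp add: potf_def Bd)

lemma cost_nat: "cost n x y = (\<Sum>j<n. F (x (int j)) (y (int j)))"
proof -
  have e: "{0..<int n} = int ` {0..<n}" using image_int_atLeastLessThan[of 0 n] by simp
  have "cost n x y = (\<Sum>j\<in>{0..<n}. F (x (int j)) (y (int j)))"
    unfolding cost_def e by (rule sum.reindex_cong[where l=int]) auto
  then show ?thesis by (simp add: atLeast0LessThan)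
qed

lemma step1:
  assumes m: "m \<in> inv_probs2 X Y" and marg: "distr m seqM snd = \<nu>"
  shows "integral\<^sup>L \<nu> (A n) \<le> n * integral\<^sup>L m (potf F)"
proof -
  have sm: "sets m = sets (seqM \<Otimes>\<^sub>M seqM)" and pm: "prob_space m" and mXY: "emeasure m (X \<times> Y) = 1"
    and inv: "distr m m HH = m"
    using m unfolding inv_probs2_def HH_def by auto
  interpret prob_space m by (rule pm)
  have mc: "measurable m N = measurable (seqM \<Otimes>\<^sub>M seqM) N" for N
    by (rule measurable_cong_sets[OF sm refl])
  have HHm: "HH \<in> measurable m m"
    using HH_meas by (simp add: mc measurable_cong_sets[OF refl sm])
  have pm_meas: "(\<lambda>p. potf F ((HH ^^ j) p)) \<in> borel_measurable m" for j
    unfolding mc by measurable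
  have intg: "integrable m (\<lambda>p. potf F ((HH ^^ j) p))" for j
    by (rule integrable_const_bound[where B=Bd]) (auto simp: potf_bound pm_meas)
  have inv_int: "integral\<^sup>L m (\<lambda>p. potf F ((HH ^^ j) p)) = integral\<^sup>L m (potf F)" for j
  proof (induction j)
    case (Suc j)
    have "integral\<^sup>L m (\<lambda>p. potf F ((HH ^^ Suc j) p)) = integral\<^sup>L m (\<lambda>p. potf F ((HH ^^ j) (HH p)))"
      by (simp only: funpow_Suc_right comp_def)
    also have "\<dots> = integral\<^sup>L (distr m m HH) (\<lambda>p. potf F ((HH ^^ j) p))"
      by (rule integral_distr[symmetric]) (rule HHm, rule pm_meas)
    also have "\<dots> = integral\<^sup>L m (\<lambda>p. potf F ((HH ^^ j) p))" by (simp add: inv)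
    finally show ?case using Suc by simp
  qed simp
  define c where "c p = (\<Sum>j<n. potf F ((HH ^^ j) p))" for p
  have c_eq: "c p = cost n (fst p) (snd p)" for p
    unfolding c_def cost_nat by (simp add: potf_HH)
  have "integral\<^sup>L m c = (\<Sum>j<n. integral\<^sup>L m (\<lambda>p. potf F ((HH ^^ j) p)))"
    unfolding c_def by (rule Bochner_Integration.integral_sum[where f="\<lambda>j p. potf F ((HH ^^ j) p)"]) (rule intg)
  then have c_int: "integral\<^sup>L m c = n * integral\<^sup>L m (potf F)"
    by (simp add: inv_int)
  have c_intg: "integrable m c" unfolding c_def by (auto intro: intg)
  have sndm: "snd \<in> measurable m seqM" unfolding mc by simp
  have A_intg: "integrable m (\<lambda>p. A n (snd p))"
  proof (rule integrable_const_bound[where B="n * Bd"])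
    show "AE x in m. norm (A n (snd x)) \<le> n * Bd" using A_bound by simp
    show "(\<lambda>p. A n (snd p)) \<in> borel_measurable m" unfolding mc by measurable
  qed
  have XYm: "X \<times> Y \<in> sets m" unfolding sm using X_sets Y_sets by simp
  have "AE p in m. p \<in> X \<times> Y"
    using XYm mXY by (subst AE_in_set_eq_1) (auto simp: emeasure_eq_measure)
  then have "AE p in m. A n (snd p) \<le> c p"
    by eventually_elim (auto simp: c_eq intro!: A_le)
  then have "integral\<^sup>L m (\<lambda>p. A n (snd p)) \<le> integral\<^sup>L m c"
    using A_intg c_intg by (intro integral_mono_AE) auto
  moreover have "integral\<^sup>L \<nu> (A n) = integral\<^sup>L m (\<lambda>p. A n (snd p))"
  proof -
    have "integral\<^sup>L (distr m seqM snd) (A n) = integral\<^sup>L m (\<lambda>p. A n (snd p))"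
      using sndm A_meas by (rule integral_distr)
    then show ?thesis using marg by simp
  qed
  ultimately show ?thesis using c_int by linarith
qed

end

context sett begin

definition br :: "nat \<Rightarrow> 'a \<Rightarrow> 'a \<Rightarrow> (int \<Rightarrow> 'a)" where
  "br N a b = (SOME x. x \<in> X \<and> x (int N - 1 - int D) = a \<and> x (int N) = b)"

lemma br:
  assumes "z \<in> X" "z' \<in> X"
  shows "br N (z (int N - 1 - int D)) (z' 0) \<in> X"
    "br N (z (int N - 1 - int D)) (z' 0) (int N - 1 - int D) = z (int N - 1 - int D)"
    "br N (z (int N - 1 - int D)) (z' 0) (int N) = z' 0"
proof -
  have z2: "shiftZ (- int N) z' \<in> X" using assms(2) by (rule X_shift)
  have "int N - (int N - 1 - int D) \<ge> int D" by simp
  from trX[OF assms(1) z2 this] obtain x where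
    x: "x \<in> X" "\<forall>j\<le>int N - 1 - int D. x j = z j" "\<forall>j\<ge>int N. x j = shiftZ (- int N) z' j" by blast
  have "\<exists>x. x \<in> X \<and> x (int N - 1 - int D) = z (int N - 1 - int D) \<and> x (int N) = z' 0"
    using x by (intro exI[of _ x]) auto
  then have "br N (z (int N - 1 - int D)) (z' 0) \<in> X \<and>
     br N (z (int N - 1 - int D)) (z' 0) (int N - 1 - int D) = z (int N - 1 - int D) \<and>
     br N (z (int N - 1 - int D)) (z' 0) (int N) = z' 0"
    unfolding br_def by (rule someI_ex)
  then show "br N (z (int N - 1 - int D)) (z' 0) \<in> X"
    "br N (z (int N - 1 - int D)) (z' 0) (int N - 1 - int D) = z (int N - 1 - int D)"
    "br N (z (int N - 1 - int D)) (z' 0) (int N) = z' 0" by auto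
qed

definition blk :: "nat \<Rightarrow> (int \<Rightarrow> 'a) \<Rightarrow> int \<Rightarrow> int \<Rightarrow> 'a" where
  "blk N y k i = (if i \<le> int N - 1 - int D then zc N (shiftZ (k * int N) y) i
      else br N (zc N (shiftZ (k * int N) y) (int N - 1 - int D)) (zc N (shiftZ ((k + 1) * int N) y) 0) i)"

definition Phi :: "nat \<Rightarrow> (int \<Rightarrow> 'a) \<Rightarrow> (int \<Rightarrow> 'a)" where
  "Phi N y t = blk N y (t div int N) (t mod int N)"

lemma Phi_block: "0 \<le> i \<Longrightarrow> i < int N \<Longrightarrow> Phi N y (k * int N + i) = blk N y k i"
  unfolding Phi_def by simp

lemma decomp:
  assumes "N \<ge> 1"
  obtains k i where "t = k * int N + i" "0 \<le> i" "i < int N"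
proof -
  have "t = (t div int N) * int N + t mod int N" by simp
  moreover have "0 \<le> t mod int N" "t mod int N < int N" using assms by auto
  ultimately show ?thesis using that by blast
qed

lemma Phi_X:
  assumes N: "N \<ge> D + 1"
  shows "Phi N y \<in> X"
proof -
  have N1: "N \<ge> 1" using N D_pos by simp
  have "(Phi N y t, Phi N y (t + 1)) \<notin> FX" for t
  proof -
    obtain k i where t: "t = k * int N + i" "0 \<le> i" "i < int N" using decomp[OF N1] by blast
    define z where "z = zc N (shiftZ (k * int N) y)"
    define z' where "z' = zc N (shiftZ ((k + 1) * int N) y)"
    define b where "b = br N (z (int N - 1 - int D)) (z' 0)"
    have zX: "z \<in> X" and z'X: "z' \<in> X" unfolding z_def z'_def by (rule zc)+
    have b: "b \<in> X" "b (int N - 1 - int D) = z (int N - 1 - int D)" "b (int N) = z' 0"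
      unfolding b_def using br[OF zX z'X] by auto
    have pz: "(z j, z (j + 1)) \<notin> FX" for j using zX unfolding X_eq by auto
    have pb: "(b j, b (j + 1)) \<notin> FX" for j using b(1) unfolding X_eq by auto
    have blk_eq: "blk N y k j = (if j \<le> int N - 1 - int D then z j else b j)" for j
      unfolding blk_def z_def z'_def b_def by simp
    show ?thesis
    proof (cases "i + 1 < int N")
      case True
      have e1: "Phi N y t = blk N y k i" using t by (simp add: Phi_block)
      have e2: "Phi N y (t + 1) = blk N y k (i + 1)"
        using t True Phi_block[of "i + 1" N y k] by (simp add: add.assoc)
      consider "i + 1 \<le> int N - 1 - int D" | "i = int N - 1 - int D" | "i > int N - 1 - int D" by linarith
      then show ?thesis
      proof cases
        case 1 then show ?thesis using e1 e2 pz by (simp add: blk_eq)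
      next
        case 2
        then have "Phi N y t = b i" "Phi N y (t + 1) = b (i + 1)"
          using e1 e2 b(2) D_pos by (auto simp: blk_eq)
        then show ?thesis using pb by simp
      next
        case 3 then show ?thesis using e1 e2 pb by (simp add: blk_eq)
      qed
    next
      case False
      then have i: "i = int N - 1" using t by simp
      have "int N - 1 > int N - 1 - int D" using D_pos by simp
      then have e1: "Phi N y t = b (int N - 1)" using t i N by (simp add: Phi_block blk_eq)
      have "t + 1 = (k + 1) * int N + 0" using t i by (simp add: algebra_simps)
      then have "Phi N y (t + 1) = blk N y (k + 1) 0" using N1 by (simp add: Phi_block[of 0 N y "k + 1", symmetric])
      also have "\<dots> = z' 0" using N unfolding blk_def z'_def by simp
      finally have e2: "Phi N y (t + 1) = b (int N - 1 + 1)" using b(3) by simp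
      show ?thesis using e1 e2 pb by metis
    qed
  qed
  then show ?thesis unfolding X_eq by blast
qed

lemma Phi_equiv:
  assumes N: "N \<ge> 1"
  shows "Phi N (shiftZ (int N) y) = shiftZ (int N) (Phi N y)"
proof
  fix t
  obtain k i where t: "t = k * int N + i" "0 \<le> i" "i < int N" using decomp[OF N] by blast
  have "t + int N = (k + 1) * int N + i" using t by (simp add: algebra_simps)
  then have "shiftZ (int N) (Phi N y) t = Phi N y ((k + 1) * int N + i)" by simp
  also have "\<dots> = blk N y (k + 1) i" using t by (simp add: Phi_block)
  finally have "shiftZ (int N) (Phi N y) t = blk N y (k + 1) i" .
  moreover have "Phi N (shiftZ (int N) y) t = blk N (shiftZ (int N) y) k i" using t by (simp add: Phi_block)
  moreover have "shiftZ (k * int N) (shiftZ (int N) y) = shiftZ ((k + 1) * int N) y"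
    "shiftZ ((k + 1) * int N) (shiftZ (int N) y) = shiftZ ((k + 1 + 1) * int N) y"
    by (auto simp: shiftZ_def algebra_simps)
  ultimately show "Phi N (shiftZ (int N) y) t = shiftZ (int N) (Phi N y) t"
    unfolding blk_def by simp
qed

lemma blk_dep:
  assumes "\<And>j. j \<in> {k * int N..<k * int N + 2 * int N} \<Longrightarrow> y j = y' j"
  shows "blk N y k i = blk N y' k i"
proof -
  have "zc N (shiftZ (k * int N) y) = zc N (shiftZ (k * int N) y')"
    by (rule zc_dep) (use assms in auto)
  moreover have "zc N (shiftZ ((k + 1) * int N) y) = zc N (shiftZ ((k + 1) * int N) y')"
    by (rule zc_dep) (use assms in \<open>auto simp: algebra_simps\<close>)
  ultimately show ?thesis unfolding blk_def by simp
qed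

lemma Phi_meas: "Phi N \<in> measurable seqM seqM"
proof (rule meas_to_seqM)
  fix t
  show "(\<lambda>y. Phi N y t) \<in> measurable seqM (count_space UNIV)"
    unfolding Phi_def
    by (rule fin_dep_meas[of "{t div int N * int N..<t div int N * int N + 2 * int N}"])
       (auto intro: blk_dep)
qed

lemma Phi_dep0:
  assumes "\<And>j. j \<in> {0..<2 * int N} \<Longrightarrow> y j = y' j" "0 \<le> i" "i < int N"
  shows "Phi N y i = Phi N y' i"
  using Phi_block[of i N y 0] Phi_block[of i N y' 0] assms blk_dep[of 0 N y y' i] by simp

lemma Phi_cost:
  assumes N: "N \<ge> D + 1"
  shows "cost N (Phi N y) y \<le> A N y + 2 * Bd * D"
proof -
  have "cost N (Phi N y) y \<le> cost N (zc N y) y + 2 * Bd * card {int N - int D..<int N}"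
    unfolding cost_def
  proof (rule sum_diff_bound)
    fix j assume j: "j \<in> {0..<int N} - {int N - int D..<int N}"
    then have jj: "j \<le> int N - 1 - int D" "0 \<le> j" "j < int N" by auto
    then have "Phi N y j = blk N y 0 j" using Phi_block[of j N y 0] by simp
    also have "\<dots> = zc N y j" using jj unfolding blk_def by (simp add: shiftZ_def)
    finally show "F (Phi N y j) (y j) = F (zc N y j) (y j)" by simp
  qed (auto intro: Bd)
  then show ?thesis unfolding A_def by simp
qed

end

lemma shiftZ_0[simp]: "shiftZ 0 x = x"
  by (simp add: shiftZ_def)

lemma inv_probsD:
  assumes "\<nu> \<in> inv_probs Y"
  shows "sets \<nu> = sets seqM" "prob_space \<nu>" "emeasure \<nu> Y = 1" "distr \<nu> \<nu> shift = \<nu>"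
  using assms unfolding inv_probs_def by auto

lemma inv_iter:
  assumes nu: "\<nu> \<in> inv_probs (Y::(int \<Rightarrow> 'a::finite) set)"
  shows "distr \<nu> \<nu> (shift ^^ n) = \<nu>"
proof (induction n)
  case 0
  show ?case by (simp add: distr_id2)
next
  case (Suc n)
  have sn: "sets \<nu> = sets seqM" using inv_probsD[OF nu] by simp
  have mc: "measurable \<nu> \<nu> = measurable seqM seqM"
    by (rule measurable_cong_sets[OF sn sn])
  have "distr \<nu> \<nu> (shift ^^ Suc n) = distr \<nu> \<nu> ((shift ^^ n) \<circ> shift)"
    by (simp only: funpow_Suc_right)
  also have "\<dots> = distr (distr \<nu> \<nu> shift) \<nu> (shift ^^ n)"
    by (rule distr_distr[symmetric]) (simp_all add: mc)
  also have "\<dots> = \<nu>" unfolding inv_probsD(4)[OF nu] by (rule Suc.IH)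
  finally show ?case .
qed

lemma inv_emeasure:
  assumes nu: "\<nu> \<in> inv_probs (Y::(int \<Rightarrow> 'a::finite) set)" and B: "B \<in> sets seqM"
  shows "emeasure \<nu> ((shift ^^ n) -` B) = emeasure \<nu> B"
proof -
  have sn: "sets \<nu> = sets seqM" using inv_probsD[OF nu] by simp
  have sp: "space \<nu> = UNIV" using sets_eq_imp_space_eq[OF sn] by simp
  have mc: "measurable \<nu> \<nu> = measurable seqM seqM"
    by (rule measurable_cong_sets[OF sn sn])
  have "emeasure (distr \<nu> \<nu> (shift ^^ n)) B = emeasure \<nu> ((shift ^^ n) -` B \<inter> space \<nu>)"
    by (rule emeasure_distr) (simp_all add: mc sn B)
  then show ?thesis using inv_iter[OF nu, of n] sp by simp
qed

context sett begin

lemma step3: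
  assumes nu: "\<nu> \<in> inv_probs Y" and N: "N \<ge> D + 1"
  shows "\<exists>m \<in> inv_probs2 X Y. distr m seqM snd = \<nu> \<and>
           N * integral\<^sup>L m (potf F) \<le> integral\<^sup>L \<nu> (A N) + 2 * Bd * D"
proof -
  have N1: "N \<ge> 1" using N D_pos by simp
  have sn: "sets \<nu> = sets seqM" and pn: "prob_space \<nu>" and nY: "emeasure \<nu> Y = 1"
    using inv_probsD[OF nu] by auto
  have spn: "space \<nu> = UNIV" using sets_eq_imp_space_eq[OF sn] by simp
  interpret nu: prob_space \<nu> by (rule pn)
  define Q where "Q = measure_pmf (pmf_of_set {..<N})"
  interpret Q: prob_space Q unfolding Q_def by (rule prob_space_measure_pmf)
  interpret PS: pair_prob_space Q \<nu> by unfold_locales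
  define P where "P = Q \<Otimes>\<^sub>M \<nu>"
  have spP: "space P = UNIV" unfolding P_def by (simp add: space_pair_measure spn Q_def)
  have sP: "sets P = sets (count_space UNIV \<Otimes>\<^sub>M seqM)" unfolding P_def Q_def
    by (rule sets_pair_measure_cong[OF sets_measure_pmf_count_space sn])
  have mcP: "measurable P M = measurable (count_space UNIV \<Otimes>\<^sub>M seqM) M" for M :: "'z measure"
    by (rule measurable_cong_sets[OF sP refl])
  define G where "G = (\<lambda>(th::nat, y). ((shift ^^ th) (Phi N y), (shift ^^ th) y))"
  have Gth_meas: "(\<lambda>y. G (th, y)) \<in> measurable seqM (seqM \<Otimes>\<^sub>M seqM)" for th
    unfolding G_def
    by (simp, intro measurable_Pair measurable_compose[OF Phi_meas funpow_shift_meas] funpow_shift_meas)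
  have G_meas: "G \<in> measurable P (seqM \<Otimes>\<^sub>M seqM)"
    unfolding mcP by (rule measurable_pair_measure_countable1) (auto intro: Gth_meas)
  define m where "m = distr P (seqM \<Otimes>\<^sub>M seqM) G"
  have sm: "sets m = sets (seqM \<Otimes>\<^sub>M seqM)" unfolding m_def by simp
  have pm: "prob_space m" unfolding m_def P_def by (rule PS.prob_space_distr) (use G_meas P_def in simp)
  have emP: "emeasure P E = (\<Sum>th<N. emeasure \<nu> (Pair th -` E)) / N" if E: "E \<in> sets P" for E
  proof -
    have "emeasure P E = (\<integral>\<^sup>+th. emeasure \<nu> (Pair th -` E) \<partial>Q)"
      unfolding P_def by (rule nu.emeasure_pair_measure_alt) (use E P_def in simp)
    also have "\<dots> = (\<Sum>th<N. emeasure \<nu> (Pair th -` E)) / N"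
    proof -
      have "0 \<in> {..<N}" using N1 by simp
      then have ne: "{..<N} \<noteq> {}" by blast
      show ?thesis unfolding Q_def using ne by (subst nn_integral_pmf_of_set) auto
    qed
    finally show ?thesis .
  qed
  have emG: "emeasure P (f -` B \<inter> space P) = (\<Sum>th<N. emeasure \<nu> {y. f (th, y) \<in> B}) / N"
    if f: "f \<in> measurable P M" and B: "B \<in> sets M" for f :: "nat \<times> (int \<Rightarrow> 'a) \<Rightarrow> 'z" and M B
  proof -
    have "f -` B \<inter> space P \<in> sets P" using f B by (rule measurable_sets)
    then have "emeasure P (f -` B \<inter> space P) = (\<Sum>th<N. emeasure \<nu> (Pair th -` (f -` B \<inter> space P))) / N"
      by (rule emP)
    moreover have "Pair th -` (f -` B \<inter> space P) = {y. f (th, y) \<in> B}" for th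
      using spP by auto
    ultimately show ?thesis by simp
  qed
  have mXY: "emeasure m (X \<times> Y) = 1"
  proof -
    have XY: "X \<times> Y \<in> sets (seqM \<Otimes>\<^sub>M seqM)" using X_sets Y_sets by simp
    have "emeasure m (X \<times> Y) = emeasure P (G -` (X \<times> Y) \<inter> space P)"
      unfolding m_def by (rule emeasure_distr[OF G_meas XY])
    also have "\<dots> \<ge> emeasure P (UNIV \<times> Y)"
    proof (rule emeasure_mono)
      show "UNIV \<times> Y \<subseteq> G -` (X \<times> Y) \<inter> space P"
        using spP by (auto simp: G_def funpow_shift intro!: X_shift Y_shift Phi_X[OF N])
      show "G -` (X \<times> Y) \<inter> space P \<in> sets P" using G_meas XY by (rule measurable_sets)
    qed
    moreover have "emeasure P (UNIV \<times> Y) = 1"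
      unfolding P_def using nY Y_sets sn
      by (subst nu.emeasure_pair_measure_Times) (auto simp: Q_def)
    ultimately have "emeasure m (X \<times> Y) \<ge> 1" by simp
    moreover have "emeasure m (X \<times> Y) \<le> 1" using prob_space.emeasure_le_1[OF pm] by simp
    ultimately show ?thesis by simp
  qed
  have minv: "distr m m HH = m"
  proof -
    have mcm: "measurable M m = measurable M (seqM \<Otimes>\<^sub>M seqM)" for M :: "'z measure"
      by (rule measurable_cong_sets[OF refl sm])
    have HHm: "HH \<in> measurable (seqM \<Otimes>\<^sub>M seqM) m" by (simp add: mcm)
    have "distr m m HH = distr P m (HH \<circ> G)"
      unfolding m_def by (rule distr_distr) (use HHm G_meas in simp_all)
    also have "\<dots> = m"
    proof (rule measure_eqI)
      show "sets (distr P m (HH \<circ> G)) = sets m" by simp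
      fix B assume "B \<in> sets (distr P m (HH \<circ> G))"
      then have B: "B \<in> sets (seqM \<Otimes>\<^sub>M seqM)" using sm by simp
      have HG: "HH \<circ> G \<in> measurable P (seqM \<Otimes>\<^sub>M seqM)" using HH_meas G_meas by simp
      have HGm: "HH \<circ> G \<in> measurable P m" using HG by (simp add: mcm)
      define g where "g th = emeasure \<nu> {y. G (th, y) \<in> B}" for th
      have HGs: "HH (G (th, y)) = G (Suc th, y)" for th y
        by (simp add: G_def HH_def funpow_swap1)
      have "emeasure (distr P m (HH \<circ> G)) B = emeasure P ((HH \<circ> G) -` B \<inter> space P)"
        by (rule emeasure_distr[OF HGm]) (use B sm in simp)
      also have "\<dots> = (\<Sum>th<N. g (Suc th)) / N"
        unfolding g_def by (subst emG[OF HG B]) (simp add: HGs)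
      also have "(\<Sum>th<N. g (Suc th)) = (\<Sum>th<N. g th)"
      proof -
        have gN: "g N = g 0"
        proof -
          have "{y. G (N, y) \<in> B} = (shift ^^ N) -` {y. G (0, y) \<in> B}"
            by (auto simp: G_def funpow_shift Phi_equiv[OF N1])
          moreover have "{y. G (0, y) \<in> B} \<in> sets seqM"
            using measurable_sets[OF Gth_meas[of 0] B] by (simp add: vimage_def)
          then have "emeasure \<nu> ((shift ^^ N) -` {y. G (0, y) \<in> B}) = emeasure \<nu> {y. G (0, y) \<in> B}"
            by (rule inv_emeasure[OF nu])
          ultimately show ?thesis unfolding g_def by simp
        qed
        obtain M where M: "N = Suc M" using N1 by (cases N) auto
        have "(\<Sum>th<N. g (Suc th)) = (\<Sum>th<M. g (Suc th)) + g N" by (simp add: M)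
        also have "\<dots> = g 0 + (\<Sum>th<M. g (Suc th))" using gN by (simp add: add.commute)
        also have "\<dots> = (\<Sum>th<N. g th)" unfolding M by (rule sum.lessThan_Suc_shift[symmetric])
        finally show ?thesis .
      qed
      also have "(\<Sum>th<N. g th) / N = emeasure P (G -` B \<inter> space P)"
        unfolding g_def by (subst emG[OF G_meas B]) simp
      also have "\<dots> = emeasure m B" unfolding m_def by (rule emeasure_distr[OF G_meas B, symmetric])
      finally show "emeasure (distr P m (HH \<circ> G)) B = emeasure m B" .
    qed
    finally show ?thesis .
  qed
  have mmarg: "distr m seqM snd = \<nu>"
  proof -
    have "distr m seqM snd = distr P seqM (snd \<circ> G)"
      unfolding m_def by (rule distr_distr) (use G_meas in simp_all)
    also have "\<dots> = \<nu>"
    proof (rule measure_eqI)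
      show "sets (distr P seqM (snd \<circ> G)) = sets \<nu>" using sn by simp
      fix B assume "B \<in> sets (distr P seqM (snd \<circ> G))"
      then have B: "B \<in> sets seqM" by simp
      have sG: "snd \<circ> G \<in> measurable P seqM" using G_meas by simp
      have "emeasure (distr P seqM (snd \<circ> G)) B = emeasure P ((snd \<circ> G) -` B \<inter> space P)"
        by (rule emeasure_distr[OF sG B])
      also have "\<dots> = (\<Sum>th<N. emeasure \<nu> {y. (snd \<circ> G) (th, y) \<in> B}) / N"
        by (rule emG[OF sG B])
      also have "(\<Sum>th<N. emeasure \<nu> {y. (snd \<circ> G) (th, y) \<in> B}) = (\<Sum>th<N. emeasure \<nu> B)"
      proof (rule sum.cong[OF refl])
        fix th
        have "{y. (snd \<circ> G) (th, y) \<in> B} = (shift ^^ th) -` B" by (auto simp: G_def)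
        then show "emeasure \<nu> {y. (snd \<circ> G) (th, y) \<in> B} = emeasure \<nu> B"
          using inv_emeasure[OF nu B] by simp
      qed
      also have "(\<Sum>th<N. emeasure \<nu> B) / N = emeasure \<nu> B"
        using N1 by (simp add: ennreal_mult_divide_eq mult.commute[of "of_nat N"])
      finally show "emeasure (distr P seqM (snd \<circ> G)) B = emeasure \<nu> B" .
    qed
    finally show ?thesis .
  qed
  have mint: "N * integral\<^sup>L m (potf F) \<le> integral\<^sup>L \<nu> (A N) + 2 * Bd * D"
  proof -
    interpret PP: prob_space P unfolding P_def
      by (rule prob_space_pair[OF Q.prob_space_axioms nu.prob_space_axioms])
    have "0 \<in> {..<N}" using N1 by simp
    then have ne: "{..<N} \<noteq> {}" by blast
    have pG: "(\<lambda>p. potf F (G p)) \<in> borel_measurable P" by (rule measurable_compose[OF G_meas potf_meas])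
    have intP: "integrable P (\<lambda>p. potf F (G p))"
      by (rule PP.integrable_const_bound[where B=Bd]) (auto simp: potf_bound pG)
    define h where "h th y = F (Phi N y (int th)) (y (int th))" for th y
    have pGh: "potf F (G (th, y)) = h th y" for th y by (simp add: G_def h_def potf_def)
    have hmeas: "h th \<in> borel_measurable \<nu>" if "th < N" for th
    proof -
      have "h th \<in> borel_measurable seqM"
      proof (rule fin_dep_meas[of "{0..<2 * int N}"])
        fix y y' :: "int \<Rightarrow> 'a" assume "\<And>i. i \<in> {0..<2 * int N} \<Longrightarrow> y i = y' i"
        moreover have "int th \<in> {0..<2 * int N}" using that by simp
        ultimately show "h th y = h th y'" unfolding h_def using Phi_dep0[where y=y and y'=y' and i="int th" and N=N] that by simp
      qed auto
      then show ?thesis by (simp add: measurable_cong_sets[OF sn refl])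
    qed
    have hint: "integrable \<nu> (h th)" if "th < N" for th
      by (rule nu.integrable_const_bound[where B=Bd]) (auto simp: h_def Bd hmeas that)
    have "integral\<^sup>L m (potf F) = integral\<^sup>L P (\<lambda>p. potf F (G p))"
      unfolding m_def by (rule integral_distr[OF G_meas potf_meas])
    also have "\<dots> = (\<integral>th. (\<integral>y. potf F (G (th, y)) \<partial>\<nu>) \<partial>Q)"
      unfolding P_def by (rule PS.integral_fst'[symmetric]) (use intP P_def in simp)
    also have "\<dots> = (\<Sum>th<N. (\<integral>y. h th y \<partial>\<nu>)) / N"
      unfolding Q_def pGh by (subst integral_pmf_of_set) (use ne in auto)
    also have "(\<Sum>th<N. (\<integral>y. h th y \<partial>\<nu>)) = (\<integral>y. (\<Sum>th<N. h th y) \<partial>\<nu>)"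
      by (rule Bochner_Integration.integral_sum[symmetric]) (auto intro: hint)
    also have "(\<lambda>y. \<Sum>th<N. h th y) = (\<lambda>y. cost N (Phi N y) y)"
      by (simp add: h_def cost_nat)
    finally have eq: "integral\<^sup>L m (potf F) = (\<integral>y. cost N (Phi N y) y \<partial>\<nu>) / N" .
    have cint: "integrable \<nu> (\<lambda>y. cost N (Phi N y) y)"
    proof -
      have "integrable \<nu> (\<lambda>y. \<Sum>th<N. h th y)" by (auto intro: hint)
      moreover have "(\<lambda>y. \<Sum>th<N. h th y) = (\<lambda>y. cost N (Phi N y) y)"
        by (simp add: h_def cost_nat)
      ultimately show ?thesis by simp
    qed
    have Aint: "integrable \<nu> (A N)"
      by (rule nu.integrable_const_bound[where B="N * Bd"])
         (auto simp: A_bound measurable_cong_sets[OF sn refl])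
    have "(\<integral>y. cost N (Phi N y) y \<partial>\<nu>) \<le> (\<integral>y. A N y + 2 * Bd * D \<partial>\<nu>)"
      by (rule integral_mono[OF cint]) (auto intro: Aint Phi_cost[OF N])
    also have "\<dots> = integral\<^sup>L \<nu> (A N) + 2 * Bd * D"
      using Aint by (simp add: nu.prob_space)
    finally show ?thesis unfolding eq using N1 by simp
  qed
  have "m \<in> inv_probs2 X Y"
    unfolding inv_probs2_def using sm pm mXY minv by (simp add: HH_def)
  then show ?thesis using mmarg mint by blast
qed

end

context sett begin

lemma int_potf_ge:
  assumes "m \<in> inv_probs2 X Y"
  shows "- Bd \<le> integral\<^sup>L m (potf F)"
proof -
  have sm: "sets m = sets (seqM \<Otimes>\<^sub>M seqM)" and pm: "prob_space m"
    using assms unfolding inv_probs2_def by auto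
  interpret prob_space m by (rule pm)
  have pmeas: "potf F \<in> borel_measurable m"
    using potf_meas by (simp add: measurable_cong_sets[OF sm refl])
  have "integrable m (potf F)"
    by (rule integrable_const_bound[where B=Bd]) (auto simp: potf_bound pmeas)
  moreover have "- Bd \<le> potf F p" for p using potf_bound[of p] by linarith
  ultimately have "integral\<^sup>L m (\<lambda>_. - Bd) \<le> integral\<^sup>L m (potf F)"
    by (intro integral_mono) auto
  then show ?thesis by (simp add: prob_space)
qed

lemma psi_le:
  assumes "m \<in> inv_probs2 X Y" "distr m seqM snd = \<nu>"
  shows "psi F X Y \<nu> \<le> integral\<^sup>L m (potf F)"
  unfolding psi_def
proof (rule cInf_lower)
  show "integral\<^sup>L m (potf F) \<in> {integral\<^sup>L m (potf F) |m. m \<in> inv_probs2 X Y \<and> distr m seqM snd = \<nu>}"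
    using assms by blast
  show "bdd_below {integral\<^sup>L m (potf F) |m. m \<in> inv_probs2 X Y \<and> distr m seqM snd = \<nu>}"
    by (rule bdd_belowI[where m="- Bd"]) (auto intro: int_potf_ge)
qed

lemma psi_ge:
  assumes "\<exists>m. m \<in> inv_probs2 X Y \<and> distr m seqM snd = \<nu>"
    and "\<And>m. m \<in> inv_probs2 X Y \<Longrightarrow> distr m seqM snd = \<nu> \<Longrightarrow> c \<le> integral\<^sup>L m (potf F)"
  shows "c \<le> psi F X Y \<nu>"
  unfolding psi_def by (rule cInf_greatest) (use assms in auto)

lemma int_le_max:
  assumes nu: "\<nu> \<in> inv_probs Y"
  shows "\<exists>ys\<in>Y. integral\<^sup>L \<nu> (A L) \<le> A L ys"
proof -
  have sn: "sets \<nu> = sets seqM" and pn: "prob_space \<nu>" and nY: "emeasure \<nu> Y = 1"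
    using inv_probsD[OF nu] by auto
  interpret prob_space \<nu> by (rule pn)
  let ?V = "A L ` Y"
  have "?V \<subseteq> (\<lambda>h. A L h) ` ({0..<int L} \<rightarrow>\<^sub>E UNIV)"
  proof
    fix v assume "v \<in> ?V"
    then obtain w where "v = A L w" by blast
    moreover have "A L w = A L (restrict w {0..<int L})" by (rule A_dep) simp
    moreover have "restrict w {0..<int L} \<in> {0..<int L} \<rightarrow>\<^sub>E UNIV" by simp
    ultimately show "v \<in> (\<lambda>h. A L h) ` ({0..<int L} \<rightarrow>\<^sub>E UNIV)" by blast
  qed
  moreover have "finite ({0..<int L} \<rightarrow>\<^sub>E (UNIV::'a set))" by (rule finite_PiE) auto
  ultimately have fin: "finite ?V" by (meson finite_imageI finite_subset)
  have ne: "?V \<noteq> {}" using Y_ne by simp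
  obtain ys where ys: "ys \<in> Y" "Max ?V = A L ys" using Max_in[OF fin ne] by auto
  have Ysets: "Y \<in> events" using Y_sets sn by simp
  have "AE y in \<nu>. y \<in> Y"
    using Ysets nY by (subst AE_in_set_eq_1) (auto simp: emeasure_eq_measure)
  then have "AE y in \<nu>. A L y \<le> A L ys"
    by eventually_elim (use fin ys in \<open>auto simp flip: ys(2)\<close>)
  moreover have Aint: "integrable \<nu> (A L)"
    by (rule integrable_const_bound[where B="L * Bd"])
       (auto simp: A_bound measurable_cong_sets[OF sn refl])
  ultimately have "integral\<^sup>L \<nu> (A L) \<le> integral\<^sup>L \<nu> (\<lambda>_. A L ys)"
    by (intro integral_mono_AE) auto
  then show ?thesis using ys(1) by (auto simp: prob_space)
qed

lemma key:
  assumes nu0: "\<nu>0 \<in> inv_probs Y" and supp: "emeasure \<nu>0 (YfC F X Y C) = 1"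
    and nu: "\<nu> \<in> inv_probs Y"
  shows "psi F X Y \<nu> \<le> psi F X Y \<nu>0"
proof -
  have sn0: "sets \<nu>0 = sets seqM" and pn0: "prob_space \<nu>0"
    using inv_probsD[OF nu0] by auto
  interpret n0: prob_space \<nu>0 by (rule pn0)
  have Ysets: "YfC F X Y C \<in> sets \<nu>0"
    using supp emeasure_notin_sets by fastforce
  have AEC: "AE y in \<nu>0. y \<in> YfC F X Y C"
    using Ysets supp by (subst n0.AE_in_set_eq_1) (auto simp: n0.emeasure_eq_measure)
  define K where "K = C + 8 * D * Bd"
  have bound: "(real n - 2 * D) * psi F X Y \<nu> \<le> n * psi F X Y \<nu>0 + K" if n: "n \<ge> 3 * D + 1" for n
  proof -
    define L where "L = n - 2 * D"
    have L: "L \<ge> D + 1" "real L = real n - 2 * D" using n unfolding L_def by auto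
    obtain m where m: "m \<in> inv_probs2 X Y" "distr m seqM snd = \<nu>"
      "L * integral\<^sup>L m (potf F) \<le> integral\<^sup>L \<nu> (A L) + 2 * Bd * D"
      using step3[OF nu L(1)] by blast
    obtain ys where ys: "ys \<in> Y" "integral\<^sup>L \<nu> (A L) \<le> A L ys" using int_le_max[OF nu] by blast
    have "L * psi F X Y \<nu> \<le> L * integral\<^sup>L m (potf F)"
      using psi_le[OF m(1,2)] by (simp add: mult_left_mono)
    then have c1: "L * psi F X Y \<nu> \<le> A L ys + 2 * Bd * D" using m(3) ys(2) by linarith
    have "(A L ys - C - 6 * D * Bd) / n \<le> psi F X Y \<nu>0"
    proof (rule psi_ge)
      show "\<exists>m. m \<in> inv_probs2 X Y \<and> distr m seqM snd = \<nu>0"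
        using step3[OF nu0 L(1)] by blast
      fix m0 assume m0: "m0 \<in> inv_probs2 X Y" "distr m0 seqM snd = \<nu>0"
      have A0: "integral\<^sup>L \<nu>0 (A n) \<le> n * integral\<^sup>L m0 (potf F)" by (rule step1[OF m0])
      have "AE y in \<nu>0. A L ys - C - 6 * D * Bd \<le> A n y"
        using AEC by eventually_elim (use step2 ys(1) n in \<open>auto simp: L_def\<close>)
      moreover have Aint: "integrable \<nu>0 (A n)"
        by (rule n0.integrable_const_bound[where B="n * Bd"])
           (auto simp: A_bound measurable_cong_sets[OF sn0 refl])
      ultimately have "integral\<^sup>L \<nu>0 (\<lambda>_. A L ys - C - 6 * D * Bd) \<le> integral\<^sup>L \<nu>0 (A n)"
        by (intro integral_mono_AE) auto
      then have "A L ys - C - 6 * D * Bd \<le> n * integral\<^sup>L m0 (potf F)" using A0 by (simp add: n0.prob_space)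
      moreover have "real n > 0" using n by simp
      ultimately show "(A L ys - C - 6 * D * Bd) / n \<le> integral\<^sup>L m0 (potf F)"
        by (simp add: divide_le_eq mult.commute)
    qed
    then have "A L ys - C - 6 * D * Bd \<le> n * psi F X Y \<nu>0"
      using n by (simp add: divide_le_eq mult.commute)
    then show ?thesis using c1 L(2) unfolding K_def by (simp add: algebra_simps)
  qed
  show ?thesis
  proof (rule ccontr)
    assume "\<not> ?thesis"
    then have d: "psi F X Y \<nu> - psi F X Y \<nu>0 > 0" by simp
    obtain n0 :: nat where n0: "(K + 2 * D * \<bar>psi F X Y \<nu>\<bar>) / (psi F X Y \<nu> - psi F X Y \<nu>0) < n0"
      using reals_Archimedean2 by blast
    define n where "n = n0 + 3 * D + 1"
    have nn: "n \<ge> 3 * D + 1" unfolding n_def by simp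
    have "(K + 2 * D * \<bar>psi F X Y \<nu>\<bar>) < n * (psi F X Y \<nu> - psi F X Y \<nu>0)"
    proof -
      have "(K + 2 * D * \<bar>psi F X Y \<nu>\<bar>) < n0 * (psi F X Y \<nu> - psi F X Y \<nu>0)"
        using n0 d by (simp add: divide_less_eq)
      also have "\<dots> \<le> n * (psi F X Y \<nu> - psi F X Y \<nu>0)"
        using d unfolding n_def by (intro mult_right_mono) auto
      finally show ?thesis .
    qed
    then have e3: "K + 2 * D * \<bar>psi F X Y \<nu>\<bar> < n * psi F X Y \<nu> - n * psi F X Y \<nu>0"
      by (simp add: right_diff_distrib)
    have "(real n - 2 * D) * psi F X Y \<nu> \<le> n * psi F X Y \<nu>0 + K" by (rule bound[OF nn])
    then have e1: "n * psi F X Y \<nu> - n * psi F X Y \<nu>0 \<le> K + 2 * D * psi F X Y \<nu>"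
      by (simp add: algebra_simps)
    have e2: "2 * D * psi F X Y \<nu> \<le> 2 * D * \<bar>psi F X Y \<nu>\<bar>"
      using mult_left_mono[of "psi F X Y \<nu>" "\<bar>psi F X Y \<nu>\<bar>" "2 * real D"] by simp
    show False using e1 e2 e3 by linarith
  qed
qed

end

theorem proposition3p10:
  fixes X Y :: "(int \<Rightarrow> 'a::finite) set"
    and F :: "'a \<Rightarrow> 'a \<Rightarrow> real"
    and C :: real
    and \<nu>0 :: "(int \<Rightarrow> 'a) measure"
  assumes "is_1step_SFT X" and "transitive_shift X"
    and "is_1step_SFT Y" and "transitive_shift Y"
    and "C \<ge> 0"
    and "\<nu>0 \<in> inv_probs Y"
    and "emeasure \<nu>0 (YfC F X Y C) = 1"
  shows "psi F X Y \<nu>0 = alpha F X Y"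
proof -
  obtain FX where X: "X \<noteq> {}" "X = {x. \<forall>j. (x j, x (j + 1)) \<notin> FX}"
    using assms(1) unfolding is_1step_SFT_def by blast
  obtain FY where Y: "Y \<noteq> {}" "Y = {x. \<forall>j. (x j, x (j + 1)) \<notin> FY}"
    using assms(3) unfolding is_1step_SFT_def by blast
  obtain Dx where Dx: "\<forall>x1\<in>X. \<forall>x2\<in>X. \<forall>b1 a2::int. a2 - b1 \<ge> int Dx \<longrightarrow>
      (\<exists>x'\<in>X. (\<forall>j\<le>b1. x' j = x1 j) \<and> (\<forall>j\<ge>a2. x' j = x2 j))"
    using assms(2) unfolding transitive_shift_def by blast
  obtain Dy where Dy: "\<forall>x1\<in>Y. \<forall>x2\<in>Y. \<forall>b1 a2::int. a2 - b1 \<ge> int Dy \<longrightarrow>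
      (\<exists>x'\<in>Y. (\<forall>j\<le>b1. x' j = x1 j) \<and> (\<forall>j\<ge>a2. x' j = x2 j))"
    using assms(4) unfolding transitive_shift_def by blast
  define D where "D = max Dx Dy + 1"
  interpret S: sett X Y F FX FY D
  proof
    show "X = {x. \<forall>j. (x j, x (j + 1)) \<notin> FX}" "Y = {x. \<forall>j. (x j, x (j + 1)) \<notin> FY}"
      "X \<noteq> {}" "Y \<noteq> {}" using X Y by auto
    show "1 \<le> D" unfolding D_def by simp
  next
    fix x1 x2 and b1 a2 :: int assume "x1 \<in> X" "x2 \<in> X" "int D \<le> a2 - b1"
    moreover have "int Dx \<le> int D" unfolding D_def by simp
    ultimately have "int Dx \<le> a2 - b1" by linarith
    then show "\<exists>x'\<in>X. (\<forall>j\<le>b1. x' j = x1 j) \<and> (\<forall>j\<ge>a2. x' j = x2 j)"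
      using Dx \<open>x1 \<in> X\<close> \<open>x2 \<in> X\<close> by blast
  next
    fix x1 x2 and b1 a2 :: int assume "x1 \<in> Y" "x2 \<in> Y" "int D \<le> a2 - b1"
    moreover have "int Dy \<le> int D" unfolding D_def by simp
    ultimately have "int Dy \<le> a2 - b1" by linarith
    then show "\<exists>x'\<in>Y. (\<forall>j\<le>b1. x' j = x1 j) \<and> (\<forall>j\<ge>a2. x' j = x2 j)"
      using Dy \<open>x1 \<in> Y\<close> \<open>x2 \<in> Y\<close> by blast
  qed
  have "\<And>\<nu>. \<nu> \<in> inv_probs Y \<Longrightarrow> psi F X Y \<nu> \<le> psi F X Y \<nu>0"
    using S.key[OF assms(6) assms(7)] by blast
  then have "Sup (psi F X Y ` inv_probs Y) = psi F X Y \<nu>0"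
    by (intro cSup_eq_maximum) (use assms(6) in auto)
  then show ?thesis unfolding alpha_def by simp
qed

end
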